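(* Consider the system (S) below with all parameters $b_1,b_2,b_3,a_{11},a_{12},a_{13},a_{21},a_{23},a_{31},a_{32}>0$ and $c>0$, and assume $a_{31}b_1>a_{11}b_3$. Then $$E_2=\Big(x_2,0,z_2\Big),\qquad x_2=\frac{b_3}{a_{31}},\quad z_2=\frac{b_1-a_{11}x_2}{a_{13}}>0,$$ is an equilibrium of (S), and if $a_{31}b_2>a_{21}b_3$ then $E_2$ is locally asymptotically stable (all eigenvalues of the Jacobian matrix of (S) at $E_2$ have negative real parts).
   Context: Let $x,y,z\ge 0$ denote prey, intermediate predator and top predator densities. The system (S), an intraguild predation Lotka–Volterra model with top-predator feeding switching of intensity $c$, is $$\dot x=(b_1-a_{11}x)x-a_{12}xy-\frac{a_{13}x^2z}{x+cy},\qquad \dot y=-b_2y+a_{21}xy-\frac{a_{23}y^2z}{y+cx},\qquad \dot z=-b_3z+\frac{a_{31}x^2z}{x+cy}+\frac{a_{32}y^2z}{y+cx},$$ defined on the closed nonnegative orthant minus the origin (where $x+cy>0$ and $y+cx>0$), the right-hand side being smooth in a neighbourhood of every equilibrium with $x>0$. (The fractions are the switching terms $\frac{a_{13}xz}{1+cy/x}$ etc. written with cleared denominators.) *)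

theory Defs
  imports "HOL-Analysis.Analysis"
begin

text \<open>Away from the domain (where a denominator vanishes) the division convention x/0 = 0 applies;
  this is irrelevant near equilibria with x > 0.\<close>
definition igp_field ::
  "real \<Rightarrow> real \<Rightarrow> real \<Rightarrow> real \<Rightarrow> real \<Rightarrow> real \<Rightarrow> real \<Rightarrow> real \<Rightarrow> real \<Rightarrow> real \<Rightarrow> real
   \<Rightarrow> real^3 \<Rightarrow> real^3" where
  "igp_field b1 b2 b3 a11 a12 a13 a21 a23 a31 a32 c u =
     (let x = u$1; y = u$2; z = u$3 in
      (\<chi> i. if i = 1 then (b1 - a11*x)*x - a12*x*y - a13*x^2*z / (x + c*y)
            else if i = 2 then - b2*y + a21*x*y - a23*y^2*z / (y + c*x)
            else - b3*z + a31*x^2*z / (x + c*y) + a32*y^2*z / (y + c*x)))"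

definition pt3 :: "real \<Rightarrow> real \<Rightarrow> real \<Rightarrow> real^3" where
  "pt3 x y z = (\<chi> i. if i = 1 then x else if i = 2 then y else z)"

definition cmatrix :: "(real^3 \<Rightarrow> real^3) \<Rightarrow> complex^3^3" where
  "cmatrix J = (\<chi> i j. complex_of_real (matrix J $ i $ j))"

end

theory Submission imports Defs begin

lemma quad_neg:
  fixes mu :: complex and A BC :: real
  assumes "A > 0" "BC > 0" "mu^2 + A*mu + BC = 0"
  shows "Re mu < 0"
proof -
  obtain a b where mu: "mu = Complex a b" by (cases mu)
  from assms(3) have r: "a^2 - b^2 + A*a + BC = 0" and i: "2*a*b + A*b = 0"
    by (auto simp: mu complex_eq_iff power2_eq_square)
  show ?thesis
  proof (cases "b = 0")
    case True
    with r have "a^2 + A*a + BC = 0" by simp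
    moreover have "a \<ge> 0 \<Longrightarrow> a^2 + A*a + BC > 0" using assms
      by (simp add: add_nonneg_pos add_pos_nonneg)
    ultimately show ?thesis using mu by fastforce
  next
    case False
    with i have "2*a + A = 0" by (metis mult.commute distrib_left mult_eq_0_iff)
    with assms show ?thesis using mu by simp
  qed
qed

lemma eig_lemma:
  fixes mu w1 w2 w3 :: complex and A B C p q r :: real
  assumes pos: "A > 0" "B > 0" "C > 0" "q < 0"
    and e1: "-A* w1 + p* w2 - B* w3 = mu* w1"
    and e2: "q* w2 = mu* w2"
    and e3: "C* w1 + r* w2 = mu* w3"
    and nz: "w1 \<noteq> 0 \<or> w2 \<noteq> 0 \<or> w3 \<noteq> 0"
  shows "Re mu < 0"
proof (cases "w2 = 0")
  case False
  with e2 have "mu = q" by simp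
  with pos show ?thesis by simp
next
  case True
  have e1': "-A* w1 - B* w3 = mu* w1" using e1 True by simp
  have e3': "C* w1 = mu* w3" using e3 True by simp
  have w1: "w1 \<noteq> 0"
  proof
    assume "w1 = 0"
    with nz True have "w3 \<noteq> 0" by simp
    with e1' \<open>w1 = 0\<close> pos show False by simp
  qed
  have "mu*(mu* w1) = mu * (-A* w1 - B* w3)" using e1' by simp
  also have "\<dots> = -(A*mu* w1) - B*(mu* w3)" by (simp add: algebra_simps)
  also have "\<dots> = -(A*mu* w1) - B*(C* w1)" using e3' by simp
  finally have h: "mu*(mu* w1) = -(A*mu* w1) - B*(C* w1)" .
  have "(mu^2 + A*mu + B*C) * w1 = mu*(mu* w1) + A*mu* w1 + B*(C* w1)"
    by (simp add: algebra_simps power2_eq_square)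
  hence "(mu^2 + A*mu + B*C) * w1 = 0" using h by simp
  hence "mu^2 + A*mu + (B*C) = 0" using w1 by simp
  thus ?thesis using quad_neg[of A "B*C" mu] pos by simp
qed

lemma vec_nth_has_derivative[derivative_intros]:
  "((\<lambda>u::real^'n. u $ i) has_derivative (\<lambda>h. h $ i)) F"
  using bounded_linear_vec_nth[of i] bounded_linear_imp_has_derivative by blast

lemma has_derivative_vec3:
  fixes f :: "'a::real_normed_vector \<Rightarrow> real^3"
  assumes "\<And>i. ((\<lambda>x. f x $ i) has_derivative (\<lambda>h. f' h $ i)) (at a)"
  shows "(f has_derivative f') (at a)"
proof (subst has_derivative_componentwise_within, intro ballI)
  fix b :: "real^3" assume "b \<in> Basis"
  then obtain i where b: "b = axis i 1" using axis_inverse by blast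
  have e: "\<And>v::real^3. v \<bullet> b = v $ i" unfolding b by (simp add: inner_axis)
  show "((\<lambda>x. f x \<bullet> b) has_derivative (\<lambda>x. f' x \<bullet> b)) (at a)"
    unfolding e by (rule assms)
qed
lemma pt3_simps[simp]: "pt3 x y z $ 1 = x" "pt3 x y z $ 2 = y" "pt3 x y z $ 3 = z"
  by (simp_all add: pt3_def)

lemma igp_comp:
  "igp_field b1 b2 b3 a11 a12 a13 a21 a23 a31 a32 c u $ 1 =
     (b1 - a11*u$1)*u$1 - a12*u$1*u$2 - a13*(u$1)^2*u$3 / (u$1 + c*u$2)"
  "igp_field b1 b2 b3 a11 a12 a13 a21 a23 a31 a32 c u $ 2 =
     - b2*u$2 + a21*u$1*u$2 - a23*(u$2)^2*u$3 / (u$2 + c*u$1)"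
  "igp_field b1 b2 b3 a11 a12 a13 a21 a23 a31 a32 c u $ 3 =
     - b3*u$3 + a31*(u$1)^2*u$3 / (u$1 + c*u$2) + a32*(u$2)^2*u$3 / (u$2 + c*u$1)"
  by (simp_all add: igp_field_def Let_def)

lemma igp_deriv:
  fixes b1 b2 b3 a11 a12 a13 a21 a23 a31 a32 c x z :: real
  assumes "x > 0" "c > 0"
  shows "(igp_field b1 b2 b3 a11 a12 a13 a21 a23 a31 a32 c has_derivative
     (\<lambda>h. \<chi> i. if i = 1 then (b1 - 2*a11*x - a13*z) * h$1 + (a13*c*z - a12*x)*h$2 - a13*x*h$3
               else if i = 2 then (a21*x - b2) * h$2
               else a31*z*h$1 - a31*c*z*h$2 + (a31*x - b3)*h$3)) (at (pt3 x 0 z))"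
proof (rule has_derivative_vec3)
  fix i :: 3
  have d1: "((\<lambda>u::real^3. (b1 - a11*u$1)*u$1 - a12*u$1*u$2 - a13*(u$1)^2*u$3 / (u$1 + c*u$2))
     has_derivative (\<lambda>h. (b1 - 2*a11*x - a13*z) * h$1 + (a13*c*z - a12*x)*h$2 - a13*x*h$3)) (at (pt3 x 0 z))"
    using assms
    apply -
    apply (rule has_derivative_eq_rhs)
     apply (rule derivative_intros)+
    apply (auto simp: field_simps power2_eq_square)
    done
  have d2: "((\<lambda>u::real^3. - b2*u$2 + a21*u$1*u$2 - a23*(u$2)^2*u$3 / (u$2 + c*u$1))
     has_derivative (\<lambda>h. (a21*x - b2) * h$2)) (at (pt3 x 0 z))"
    using assms
    apply -
    apply (rule has_derivative_eq_rhs)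
     apply (rule derivative_intros)+
    apply (auto simp: field_simps power2_eq_square)
    done
  have d3: "((\<lambda>u::real^3. - b3*u$3 + a31*(u$1)^2*u$3 / (u$1 + c*u$2) + a32*(u$2)^2*u$3 / (u$2 + c*u$1))
     has_derivative (\<lambda>h. a31*z*h$1 - a31*c*z*h$2 + (a31*x - b3)*h$3)) (at (pt3 x 0 z))"
    using assms
    apply -
    apply (rule has_derivative_eq_rhs)
     apply (rule derivative_intros | simp)+
    apply (auto simp: field_simps power2_eq_square)
    done
  show "((\<lambda>u. igp_field b1 b2 b3 a11 a12 a13 a21 a23 a31 a32 c u $ i) has_derivative
         (\<lambda>h. (\<chi> i. if i = 1 then (b1 - 2*a11*x - a13*z) * h$1 + (a13*c*z - a12*x)*h$2 - a13*x*h$3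
               else if i = 2 then (a21*x - b2) * h$2
               else a31*z*h$1 - a31*c*z*h$2 + (a31*x - b3)*h$3) $ i)) (at (pt3 x 0 z))"
    using exhaust_3[of i] d1 d2 d3 by (auto simp: igp_comp)
qed

theorem mainTheorem2:
  fixes b1 b2 b3 a11 a12 a13 a21 a23 a31 a32 c :: real
  assumes pos: "b1 > 0" "b2 > 0" "b3 > 0" "a11 > 0" "a12 > 0" "a13 > 0"
      "a21 > 0" "a23 > 0" "a31 > 0" "a32 > 0" "c > 0"
    and h: "a31 * b1 > a11 * b3"
  defines "x2 \<equiv> b3 / a31"
    and "z2 \<equiv> (b1 - a11 * (b3 / a31)) / a13"
    and "F \<equiv> igp_field b1 b2 b3 a11 a12 a13 a21 a23 a31 a32 c"
  shows "z2 > 0 \<and> F (pt3 x2 0 z2) = 0 \<and>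
         (a31 * b2 > a21 * b3 \<longrightarrow>
            F differentiable (at (pt3 x2 0 z2)) \<and>
            (\<forall>J. (F has_derivative J) (at (pt3 x2 0 z2)) \<longrightarrow>
               (\<forall>(mu::complex) (v::complex^3). v \<noteq> 0 \<and> cmatrix J *v v = mu *s v \<longrightarrow> Re mu < 0)))"
proof -
  have x2: "x2 > 0" using pos by (simp add: x2_def)
  have ax: "a31 * x2 = b3" using pos by (simp add: x2_def)
  have "b1 - a11 * (b3 / a31) > 0" using pos h by (simp add: field_simps)
  hence z2: "z2 > 0" using pos by (simp add: z2_def)
  have az: "a13 * z2 = b1 - a11 * x2" using pos by (simp add: z2_def x2_def)
  have "b1*x2 = (a11*x2 + a13*z2)*x2" using az by simp
  hence az2: "b1*x2 = a11*(x2*x2) + a13*(x2*z2)" by (simp add: algebra_simps)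
  have F0: "F (pt3 x2 0 z2) = 0"
    unfolding vec_eq_iff forall_3 F_def using x2 az ax az2
    by (simp add: igp_comp power2_eq_square field_simps)
  define J0 :: "real^3 \<Rightarrow> real^3" where "J0 = (\<lambda>h. \<chi> i. if i = 1 then (b1 - 2*a11*x2 - a13*z2) * h$1 + (a13*c*z2 - a12*x2)*h$2 - a13*x2*h$3
               else if i = 2 then (a21*x2 - b2) * h$2
               else a31*z2*h$1 - a31*c*z2*h$2 + (a31*x2 - b3)*h$3)"
  have dJ0: "(F has_derivative J0) (at (pt3 x2 0 z2))"
    unfolding F_def J0_def by (rule igp_deriv[OF x2 pos(11)])
  have eig: "Re mu < 0" if q: "a31 * b2 > a21 * b3" and v: "v \<noteq> 0" and ev: "cmatrix J0 *v v = mu *s v"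
    for mu :: complex and v :: "complex^3"
  proof -
    have qn: "a21*x2 - b2 < 0" using q pos by (simp add: x2_def field_simps)
    have c1: "(cmatrix J0 *v v) $ 1 = (mu *s v) $ 1" using ev by simp
    have c2: "(cmatrix J0 *v v) $ 2 = (mu *s v) $ 2" using ev by simp
    have c3: "(cmatrix J0 *v v) $ 3 = (mu *s v) $ 3" using ev by simp
    have e1: "-(a11*x2) * v$1 + (a13*c*z2 - a12*x2) * v$2 - (a13*x2) * v$3 = mu * v$1"
      using c1 az by (simp add: cmatrix_def matrix_def matrix_vector_mult_def sum_3 axis_def J0_def algebra_simps)
    have e2: "(a21*x2 - b2) * v$2 = mu * v$2"
      using c2 by (simp add: cmatrix_def matrix_def matrix_vector_mult_def sum_3 axis_def J0_def algebra_simps)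
    have e3: "(a31*z2) * v$1 + (-(a31*c*z2)) * v$2 = mu * v$3"
      using c3 ax by (simp add: cmatrix_def matrix_def matrix_vector_mult_def sum_3 axis_def J0_def algebra_simps)
    have nz: "v$1 \<noteq> 0 \<or> v$2 \<noteq> 0 \<or> v$3 \<noteq> 0"
      using v by (auto simp: vec_eq_iff forall_3)
    show ?thesis
      apply (rule eig_lemma[OF _ _ _ qn e1 _ e3 nz])
      using x2 z2 pos e2 by auto
  qed
  show ?thesis
  proof (intro conjI impI allI)
    show "z2 > 0" by fact
    show "F (pt3 x2 0 z2) = 0" by fact
    show "F differentiable at (pt3 x2 0 z2)" using dJ0 by (auto simp: differentiable_def)
  next
    fix J mu v
    assume q: "a31 * b2 > a21 * b3" and dJ: "(F has_derivative J) (at (pt3 x2 0 z2))"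
      and vv: "v \<noteq> 0 \<and> cmatrix J *v v = mu *s v"
    have "J = J0" using has_derivative_unique[OF dJ dJ0] .
    thus "Re mu < 0" using eig[OF q] vv by blast
  qed
qed

end
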